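(* Let $s \geq 3$ be a fixed integer and $q$ a power of an odd prime. The graph $H^b(s,q)$ contains at least $(1 - o(1)) \frac{ q^{4 ( s - 1) } }{4}$ copies of $K_{2,2}$, where $o(1) \to 0$ as $q \to \infty$.
   Context: Let $N: \mathbb{F}_{q^{s-1}} \to \mathbb{F}_q$ be the norm map $N(X) = X^{1 + q + q^2 + \dots + q^{s - 2}}$. $H^b(s,q)$ is the bipartite graph with parts $A$ and $B$, each a disjoint copy of $\mathbb{F}_{q^{s-1}} \times \mathbb{F}_q^*$, where $(x_1,x_2)\in A$ is adjacent to $(y_1,y_2)\in B$ if and only if $N(x_1+y_1) = x_2 y_2$. *)

theory Defs
  imports Complex_Main "HOL-Algebra.Ring" "HOL-Computational_Algebra.Primes"
begin

definition odd_prime_power :: "nat \<Rightarrow> bool" where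
  "odd_prime_power q \<longleftrightarrow> (\<exists>p k. prime p \<and> odd p \<and> k > 0 \<and> q = p ^ k)"

text \<open>Given a finite field R of order q^(s-1), the subfield F_q is the set of roots of X^q - X.\<close>
definition subfield_q :: "('a, 'b) ring_scheme \<Rightarrow> nat \<Rightarrow> 'a set" where
  "subfield_q R q = {x \<in> carrier R. x [^]\<^bsub>R\<^esub> q = x}"

definition units_q :: "('a, 'b) ring_scheme \<Rightarrow> nat \<Rightarrow> 'a set" where
  "units_q R q = subfield_q R q - {\<zero>\<^bsub>R\<^esub>}"

definition Hb_norm :: "('a, 'b) ring_scheme \<Rightarrow> nat \<Rightarrow> nat \<Rightarrow> 'a \<Rightarrow> 'a" where
  "Hb_norm R q s X = X [^]\<^bsub>R\<^esub> (\<Sum>i<s - 1. q ^ i)"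

text \<open>Vertex set of H^b(s,q): part A = Inl, part B = Inr, each a copy of F_{q^(s-1)} x F_q^*.\<close>
definition Hb_vertices :: "('a, 'b) ring_scheme \<Rightarrow> nat \<Rightarrow> (('a \<times> 'a) + ('a \<times> 'a)) set" where
  "Hb_vertices R q = Inl ` (carrier R \<times> units_q R q) \<union> Inr ` (carrier R \<times> units_q R q)"

fun Hb_adj :: "('a, 'b) ring_scheme \<Rightarrow> nat \<Rightarrow> nat \<Rightarrow>
    (('a \<times> 'a) + ('a \<times> 'a)) \<Rightarrow> (('a \<times> 'a) + ('a \<times> 'a)) \<Rightarrow> bool" where
  "Hb_adj R q s (Inl (x1, x2)) (Inr (y1, y2)) =
     (Hb_norm R q s (x1 \<oplus>\<^bsub>R\<^esub> y1) = x2 \<otimes>\<^bsub>R\<^esub> y2)"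
| "Hb_adj R q s (Inr (y1, y2)) (Inl (x1, x2)) =
     (Hb_norm R q s (x1 \<oplus>\<^bsub>R\<^esub> y1) = x2 \<otimes>\<^bsub>R\<^esub> y2)"
| "Hb_adj R q s _ _ = False"

text \<open>Copies of K_{2,2} in a graph (V, E): a copy is determined by its two sides,
  an unordered pair {P, Q} of disjoint 2-subsets of V with all cross pairs adjacent.\<close>
definition K22_copies :: "'v set \<Rightarrow> ('v \<Rightarrow> 'v \<Rightarrow> bool) \<Rightarrow> 'v set set set" where
  "K22_copies V E = {{P, Q} | P Q. P \<subseteq> V \<and> Q \<subseteq> V \<and> card P = 2 \<and> card Q = 2 \<and>
      P \<inter> Q = {} \<and> (\<forall>x\<in>P. \<forall>y\<in>Q. E x y)}"

end

theory Submission
  imports Defs "HOL-Algebra.Multiplicative_Group"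
begin


context field begin

lemma fu: "x \<in> carrier R \<Longrightarrow> x \<noteq> \<zero> \<Longrightarrow> x \<in> Units R"
  using field_Units by auto
lemma finv_closed[simp]: "x \<in> carrier R \<Longrightarrow> x \<noteq> \<zero> \<Longrightarrow> inv x \<in> carrier R"
  using fu by auto
lemma finv_r[simp]: "x \<in> carrier R \<Longrightarrow> x \<noteq> \<zero> \<Longrightarrow> x \<otimes> inv x = \<one>"
  using fu by auto
lemma finv_l[simp]: "x \<in> carrier R \<Longrightarrow> x \<noteq> \<zero> \<Longrightarrow> inv x \<otimes> x = \<one>"
  using fu by auto
lemma finv_nz: "x \<in> carrier R \<Longrightarrow> x \<noteq> \<zero> \<Longrightarrow> inv x \<noteq> \<zero>"
  using finv_r by fastforce
lemma fmult_nz: "x \<in> carrier R \<Longrightarrow> y \<in> carrier R \<Longrightarrow> x \<noteq> \<zero> \<Longrightarrow> y \<noteq> \<zero> \<Longrightarrow> x \<otimes> y \<noteq> \<zero>"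
  using integral_iff by auto
lemma fpow_nz: "x \<in> carrier R \<Longrightarrow> x \<noteq> \<zero> \<Longrightarrow> x [^] (n::nat) \<noteq> \<zero>"
  by (induct n) (auto simp: fmult_nz)

lemma fermat_field:
  assumes fin: "finite (carrier R)" and x: "x \<in> carrier R" "x \<noteq> \<zero>"
  shows "x [^] (card (carrier R) - 1) = \<one>"
proof -
  interpret G: group "mult_of R" by (rule field_mult_group)
  have "x \<in> carrier (mult_of R)" using x by simp
  then have "x [^]\<^bsub>mult_of R\<^esub> order (mult_of R) = \<one>\<^bsub>mult_of R\<^esub>" by (rule G.pow_order_eq_1)
  then show ?thesis using order_mult_of[OF fin] by (simp add: nat_pow_mult_of order_def)
qed

end

lemma geom_nat: "(q - 1) * (\<Sum>i<n. q ^ i) = (q::nat) ^ n - 1"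
proof (induct n)
  case (Suc n)
  show ?case
  proof (cases "q = 0")
    case True then show ?thesis by simp
  next
    case False
    have "(q - 1) * (\<Sum>i<Suc n. q ^ i) = (q ^ n - 1) + (q - 1) * q ^ n"
      using Suc by (simp add: algebra_simps)
    also have "\<dots> = q ^ Suc n - 1" using False
      by (simp add: algebra_simps diff_mult_distrib)
    finally show ?thesis .
  qed
qed simp



lemma card_ins_le: "finite A \<Longrightarrow> card (insert x A) \<le> Suc (card A)"
  by (simp add: card_insert_if)

lemma card4: "card {a, b, c, d} \<le> 4"
  using card_ins_le[of "{b,c,d}" a] card_ins_le[of "{c,d}" b] card_ins_le[of "{d}" c] by simp

lemma four_fiber:
  fixes T :: "(('a + 'b) \<times> ('a + 'b) \<times> ('a + 'b) \<times> ('a + 'b)) set"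
  assumes sh: "\<forall>t\<in>T. \<exists>A A' B B'. t = (Inl A, Inl A', Inr B, Inr B')" and fin: "finite T"
  shows "card T \<le> 4 * card ((\<lambda>(X, X', Y, Y'). {{X, X'}, {Y, Y'}}) ` T)"
proof -
  define g where "g = (\<lambda>(X::'a+'b, X'::'a+'b, Y::'a+'b, Y'::'a+'b). {{X, X'}, {Y, Y'}})"
  have "T \<subseteq> (\<Union>C\<in>g ` T. {t \<in> T. g t = C})" by auto
  then have "card T \<le> card (\<Union>C\<in>g ` T. {t \<in> T. g t = C})" using fin by (intro card_mono) auto
  also have "\<dots> \<le> (\<Sum>C\<in>g ` T. card {t \<in> T. g t = C})" by (rule card_UN_le) (use fin in auto)
  also have "\<dots> \<le> (\<Sum>C\<in>g ` T. 4)"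
  proof (rule sum_mono)
    fix C assume "C \<in> g ` T"
    then obtain t0 where t0: "t0 \<in> T" "C = g t0" by auto
    then obtain A A' B B' where t0e: "t0 = (Inl A, Inl A', Inr B, Inr B')" using sh by blast
    have "{t \<in> T. g t = C} \<subseteq> {(Inl A, Inl A', Inr B, Inr B'), (Inl A', Inl A, Inr B, Inr B'),
         (Inl A, Inl A', Inr B', Inr B), (Inl A', Inl A, Inr B', Inr B)}"
    proof
      fix t assume "t \<in> {t \<in> T. g t = C}"
      then have tT: "t \<in> T" and gt: "g t = g t0" using t0 by auto
      obtain A2 A2' B2 B2' where te: "t = (Inl A2, Inl A2', Inr B2, Inr B2')" using sh tT by blast
      have "{{Inl A2, Inl A2'}, {Inr B2, Inr B2'}} = ({{Inl A, Inl A'}, {Inr B, Inr B'}} :: ('a+'b) set set)"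
        using gt unfolding te t0e g_def by simp
      then have "{Inl A2, Inl A2'} = ({Inl A, Inl A'} :: ('a+'b) set) \<and> {Inr B2, Inr B2'} = ({Inr B, Inr B'} :: ('a+'b) set)"
        unfolding doubleton_eq_iff by auto
      then show "t \<in> {(Inl A, Inl A', Inr B, Inr B'), (Inl A', Inl A, Inr B, Inr B'),
         (Inl A, Inl A', Inr B', Inr B), (Inl A', Inl A, Inr B', Inr B)}"
        unfolding te doubleton_eq_iff by auto
    qed
    then show "card {t \<in> T. g t = C} \<le> 4" using card4 by (meson card_mono finite.emptyI finite.insertI order_trans)
  qed
  also have "\<dots> = 4 * card (g ` T)" by simp
  finally show ?thesis unfolding g_def .
qed

lemma K22_finite: "finite V \<Longrightarrow> finite (K22_copies V E)"
  by (rule finite_subset[of _ "Pow (Pow V)"]) (auto simp: K22_copies_def)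

context field begin
context
  fixes q s :: nat
  assumes fin: "finite (carrier R)" and cardR: "card (carrier R) = q ^ (s - 1)"
    and q2: "q \<ge> 2" and s2: "s \<ge> 2"
begin

abbreviation "NN \<equiv> Hb_norm R q s"
abbreviation "ee \<equiv> (\<Sum>i<s - 1. q ^ i)"

lemma NN_def': "NN x = x [^] ee" by (simp add: Hb_norm_def)

lemma ee_ge1: "ee \<ge> 1"
proof -
  have "q ^ 0 \<le> ee" using s2 by (intro member_le_sum) auto
  then show ?thesis by simp
qed

lemma NN_closed[simp]: "x \<in> carrier R \<Longrightarrow> NN x \<in> carrier R"
  by (simp add: NN_def')
lemma NN_mult: "x \<in> carrier R \<Longrightarrow> y \<in> carrier R \<Longrightarrow> NN (x \<otimes> y) = NN x \<otimes> NN y"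
  by (simp add: NN_def' nat_pow_distrib)
lemma NN_nz: "x \<in> carrier R \<Longrightarrow> x \<noteq> \<zero> \<Longrightarrow> NN x \<noteq> \<zero>"
  by (simp add: NN_def' fpow_nz)
lemma NN_zero: "NN \<zero> = \<zero>"
proof -
  obtain m where m: "ee = Suc m" using ee_ge1 not0_implies_Suc by fastforce
  show ?thesis unfolding NN_def' m by simp
qed
lemma NN_one[simp]: "NN \<one> = \<one>" by (simp add: NN_def')

lemma U_iff: "x \<in> units_q R q \<longleftrightarrow> x \<in> carrier R \<and> x [^] q = x \<and> x \<noteq> \<zero>"
  by (auto simp: units_q_def subfield_q_def)

lemma NN_U: assumes x: "x \<in> carrier R" "x \<noteq> \<zero>" shows "NN x \<in> units_q R q"
proof -
  have "ee * q = ee + (q - 1) * ee" using q2 by (cases q) (auto simp: algebra_simps)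
  then have e: "ee * q = ee + (q ^ (s - 1) - 1)"
    using geom_nat[of q "s - 1"] by simp
  have "(NN x) [^] q = x [^] (ee * q)" by (simp add: NN_def' nat_pow_pow x)
  also have "\<dots> = x [^] (ee + (card (carrier R) - 1))"
    by (simp only: e cardR)
  also have "\<dots> = x [^] ee \<otimes> x [^] (card (carrier R) - 1)"
    by (simp add: nat_pow_mult x)
  also have "\<dots> = NN x" using fermat_field[OF fin x] x by (simp add: NN_def')
  finally show ?thesis using x NN_nz U_iff by auto
qed

lemma U_mult: "x \<in> units_q R q \<Longrightarrow> y \<in> units_q R q \<Longrightarrow> x \<otimes> y \<in> units_q R q"
  by (simp add: U_iff nat_pow_distrib fmult_nz)

lemma U_inv: assumes "x \<in> units_q R q" shows "inv x \<in> units_q R q"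
proof -
  have x: "x \<in> carrier R" "x [^] q = x" "x \<noteq> \<zero>" using assms U_iff by auto
  have "(inv x) [^] q \<otimes> x = (inv x) [^] q \<otimes> x [^] q" using x by simp
  also have "\<dots> = (inv x \<otimes> x) [^] q" by (rule nat_pow_distrib[symmetric]) (use x in auto)
  also have "\<dots> = inv x \<otimes> x" using x by simp
  finally have eq: "(inv x) [^] q \<otimes> x = inv x \<otimes> x" .
  have "((inv x) [^] q \<otimes> x = inv x \<otimes> x) = ((inv x) [^] q = inv x)"
    by (rule m_rcancel) (use x in auto)
  then have "(inv x) [^] q = inv x" using eq by simp
  then show ?thesis using x finv_nz U_iff by auto
qed

lemma U_card: "card (units_q R q) \<le> q"
proof -
  have "units_q R q \<subseteq> {x \<in> carrier R. x [^] (q - 1) = \<one>}"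
  proof
    fix x assume "x \<in> units_q R q"
    then have x: "x \<in> carrier R" "x [^] q = x" "x \<noteq> \<zero>" using U_iff by auto
    have "x [^] (q - 1) \<otimes> x = x [^] (q - 1 + 1)" using x by (simp add: nat_pow_mult del: nat_pow_Suc)
    also have "\<dots> = \<one> \<otimes> x" using x q2 by simp
    finally have eq: "x [^] (q - 1) \<otimes> x = \<one> \<otimes> x" .
    have "(x [^] (q - 1) \<otimes> x = \<one> \<otimes> x) = (x [^] (q - 1) = \<one>)"
      by (rule m_rcancel) (use x in auto)
    then show "x \<in> {x \<in> carrier R. x [^] (q - 1) = \<one>}" using x eq by simp
  qed
  then have "card (units_q R q) \<le> card {x \<in> carrier R. x [^] (q - 1) = \<one>}"
    using fin by (intro card_mono) auto
  also have "\<dots> \<le> q - 1" using num_roots_le_deg[OF fin] q2 by auto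
  finally show ?thesis by simp
qed

definition "KK = {x \<in> carrier R. NN x = \<one>}"

lemma KK_bij: assumes g: "g \<in> carrier R" "g \<noteq> \<zero>"
  shows "bij_betw (\<lambda>k. g \<otimes> k) KK {x \<in> carrier R. NN x = NN g}"
proof (rule bij_betw_byWitness[where f'="\<lambda>x. inv g \<otimes> x"])
  show "\<forall>a\<in>KK. inv g \<otimes> (g \<otimes> a) = a" using g by (auto simp: KK_def m_assoc[symmetric])
  show "\<forall>a'\<in>{x \<in> carrier R. NN x = NN g}. g \<otimes> (inv g \<otimes> a') = a'"
    using g by (auto simp: m_assoc[symmetric])
  show "(\<otimes>) g ` KK \<subseteq> {x \<in> carrier R. NN x = NN g}" using g by (auto simp: KK_def NN_mult)
  have "NN (inv g) \<otimes> NN g = \<one>" using g by (simp add: NN_mult[symmetric])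
  then show "(\<otimes>) (inv g) ` {x \<in> carrier R. NN x = NN g} \<subseteq> KK"
    using g by (auto simp: KK_def NN_mult)
qed

lemma KK_card: assumes g: "g \<in> carrier R" "g \<noteq> \<zero>"
  shows "card {x \<in> carrier R. NN x = NN g} = card KK"
  using bij_betw_same_card[OF KK_bij[OF g]] by simp

lemma UK_card: "q ^ (s - 1) - 1 \<le> card (units_q R q) * card KK"
proof -
  let ?S = "carrier R - {\<zero>}"
  have "?S \<subseteq> (\<Union>c\<in>NN ` ?S. {x \<in> carrier R. NN x = c})" by auto
  then have "card ?S \<le> card (\<Union>c\<in>NN ` ?S. {x \<in> carrier R. NN x = c})"
    using fin by (intro card_mono) auto
  also have "\<dots> \<le> (\<Sum>c\<in>NN ` ?S. card {x \<in> carrier R. NN x = c})" by (rule card_UN_le) (use fin in auto)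
  also have "\<dots> = (\<Sum>c\<in>NN ` ?S. card KK)"
    by (rule sum.cong[OF refl]) (use KK_card in blast)
  also have "\<dots> = card (NN ` ?S) * card KK" by simp
  also have "\<dots> \<le> card (units_q R q) * card KK"
  proof -
    have "NN ` ?S \<subseteq> units_q R q" using NN_U by auto
    moreover have "finite (units_q R q)" using fin by (auto simp: units_q_def subfield_q_def)
    ultimately show ?thesis by (intro mult_le_mono1 card_mono) auto
  qed
  finally show ?thesis using fin cardR by (simp add: card_Diff_singleton)
qed


lemma inv_canc1: "x \<in> carrier R \<Longrightarrow> y \<in> carrier R \<Longrightarrow> y \<noteq> \<zero> \<Longrightarrow> y \<otimes> (x \<otimes> inv y) = x"
  by (simp add: m_lcomm[symmetric])
lemma inv_canc2: "x \<in> carrier R \<Longrightarrow> y \<in> carrier R \<Longrightarrow> y \<noteq> \<zero> \<Longrightarrow> x \<otimes> inv y \<otimes> y = x"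
  by (simp add: m_assoc)

lemma key:
  assumes a: "a \<in> carrier R" and w: "w \<in> carrier R" "w \<noteq> \<zero>"
    and b: "b \<in> carrier R" "b \<noteq> \<zero>" "b \<noteq> \<ominus> \<one>"
    and al: "al \<in> carrier R" "NN (al \<otimes> b) = NN (b \<oplus> \<one>)" "al \<noteq> \<zero>" "al \<noteq> \<one>" "al \<noteq> \<one> \<oplus> inv b"
    and x2: "x2 \<in> units_q R q"
    and be: "be = b \<otimes> (al \<ominus> \<one>)" and u: "u = al \<otimes> w" and v: "v = be \<otimes> w"
    and t: "t = u \<oplus> v \<ominus> w" and c: "c = u \<ominus> a" and d: "d = w \<ominus> a" and bb: "bb = v \<ominus> w \<oplus> a"
    and y2: "y2 = NN u \<otimes> inv x2" and y3: "y3 = NN w \<otimes> inv x2" and x3: "x3 = NN t \<otimes> inv y2"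
  shows "{{Inl (a, x2), Inl (bb, x3)}, {Inr (c, y2), Inr (d, y3)}} \<in> K22_copies (Hb_vertices R q) (Hb_adj R q s)"
proof -
  have x2c: "x2 \<in> carrier R" "x2 \<noteq> \<zero>" using x2 U_iff by auto
  have bec: "be \<in> carrier R" using be b al by simp
  have uc: "u \<in> carrier R" "v \<in> carrier R" using u v al w bec by auto
  have tc: "t \<in> carrier R" using t uc w by simp
  have al1: "al \<ominus> \<one> \<noteq> \<zero>" using al by simp
  have b1: "b \<oplus> \<one> \<noteq> \<zero>"
  proof
    assume "b \<oplus> \<one> = \<zero>"
    moreover have "b = (b \<oplus> \<one>) \<ominus> \<one>" using b by algebra
    ultimately have "b = \<ominus> \<one>" using b by algebra
    then show False using b by simp
  qed
  have tt: "t = (al \<ominus> \<one>) \<otimes> (b \<oplus> \<one>) \<otimes> w" unfolding t u v be using al b w by algebra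
  have t0: "t \<noteq> \<zero>" using tt al1 b1 w al b by (simp add: fmult_nz)
  have u0: "u \<noteq> \<zero>" using u al w by (simp add: fmult_nz)
  have y2U: "y2 \<in> units_q R q" unfolding y2 using NN_U[OF uc(1) u0] U_inv[OF x2] U_mult by blast
  have y3U: "y3 \<in> units_q R q" unfolding y3 using NN_U[OF w] U_inv[OF x2] U_mult by blast
  have x3U: "x3 \<in> units_q R q" unfolding x3 using NN_U[OF tc t0] U_inv[OF y2U] U_mult by blast
  have y2c: "y2 \<in> carrier R" "y2 \<noteq> \<zero>" using y2U U_iff by auto
  have y3c: "y3 \<in> carrier R" "y3 \<noteq> \<zero>" using y3U U_iff by auto
  have x3c: "x3 \<in> carrier R" "x3 \<noteq> \<zero>" using x3U U_iff by auto
  have cc: "c \<in> carrier R" "d \<in> carrier R" "bb \<in> carrier R" using c d bb uc w a by auto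
  have ac: "a \<oplus> c = u" unfolding c using a uc by algebra
  have ad: "a \<oplus> d = w" unfolding d using a w by algebra
  have bc: "bb \<oplus> c = t" unfolding bb c t using a uc w by algebra
  have bd: "bb \<oplus> d = v" unfolding bb d using a uc w by algebra
  have abb: "a \<noteq> bb"
  proof
    assume h: "a = bb"
    have "(be \<ominus> \<one>) \<otimes> w = bb \<ominus> a" unfolding bb v using a bec w by algebra
    then have "(be \<ominus> \<one>) \<otimes> w = \<zero>" using h a by simp
    then have "be = \<one>" using w bec integral_iff by auto
    then have "inv b \<otimes> (b \<otimes> (al \<ominus> \<one>)) = inv b" using be b by simp
    then have H: "al \<ominus> \<one> = inv b" using b al by (simp add: m_assoc[symmetric])
    have "al = \<one> \<oplus> inv b" unfolding H[symmetric] using al by algebra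
    then show False using al by simp
  qed
  have cd: "c \<noteq> d"
  proof
    assume h: "c = d"
    have "(al \<ominus> \<one>) \<otimes> w = c \<ominus> d" unfolding c d u using a al w by algebra
    then have "(al \<ominus> \<one>) \<otimes> w = \<zero>" using h cc by simp
    then show False using al1 al w integral_iff by auto
  qed
  have e1: "Hb_adj R q s (Inl (a, x2)) (Inr (c, y2))"
    using ac y2 x2c uc by (simp add: inv_canc1)
  have e2: "Hb_adj R q s (Inl (a, x2)) (Inr (d, y3))"
    using ad y3 x2c w by (simp add: inv_canc1)
  have e3: "Hb_adj R q s (Inl (bb, x3)) (Inr (c, y2))"
    using bc x3 y2c tc by (simp add: inv_canc2)
  have keyN: "NN v \<otimes> NN u = NN t \<otimes> NN w"
  proof -
    define Z where "Z = (al \<ominus> \<one>) \<otimes> (w \<otimes> w)"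
    have Zc: "Z \<in> carrier R" unfolding Z_def using al w by simp
    have eq1: "v \<otimes> u = (al \<otimes> b) \<otimes> Z" unfolding v u be Z_def using al b w by algebra
    have eq2: "(b \<oplus> \<one>) \<otimes> Z = t \<otimes> w" unfolding tt Z_def using al b w by algebra
    have "NN v \<otimes> NN u = NN (v \<otimes> u)" using uc by (simp add: NN_mult)
    also have "\<dots> = NN ((al \<otimes> b) \<otimes> Z)" using eq1 by simp
    also have "\<dots> = NN (al \<otimes> b) \<otimes> NN Z" using al b Zc by (simp add: NN_mult)
    also have "\<dots> = NN (b \<oplus> \<one>) \<otimes> NN Z" using al by simp
    also have "\<dots> = NN ((b \<oplus> \<one>) \<otimes> Z)" using b Zc by (simp add: NN_mult)
    also have "\<dots> = NN (t \<otimes> w)" by (simp only: eq2)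
    also have "\<dots> = NN t \<otimes> NN w" using tc w by (simp add: NN_mult)
    finally show ?thesis .
  qed
  have e4: "Hb_adj R q s (Inl (bb, x3)) (Inr (d, y3))"
  proof -
    have "(x3 \<otimes> y3) \<otimes> y2 = NN t \<otimes> y3 \<otimes> (inv y2 \<otimes> y2)" unfolding x3 using NN_closed[OF tc] finv_closed[OF y2c] y2c y3c by algebra
    also have "\<dots> = NN t \<otimes> NN w \<otimes> inv x2" using tc y3c y2c unfolding y3 using w x2c by (simp add: m_assoc)
    also have "\<dots> = NN v \<otimes> NN u \<otimes> inv x2" using keyN by simp
    also have "\<dots> = NN v \<otimes> y2" unfolding y2 using uc x2c by (simp add: m_assoc)
    finally have eq: "(x3 \<otimes> y3) \<otimes> y2 = NN v \<otimes> y2" .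
    have "((x3 \<otimes> y3) \<otimes> y2 = NN v \<otimes> y2) = (x3 \<otimes> y3 = NN v)"
      by (rule m_rcancel) (use y2c x3c y3c uc in auto)
    then show ?thesis using eq bd by simp
  qed
  let ?P = "{Inl (a, x2), Inl (bb, x3)} :: ('a \<times> 'a + 'a \<times> 'a) set"
  let ?Q = "{Inr (c, y2), Inr (d, y3)} :: ('a \<times> 'a + 'a \<times> 'a) set"
  have "?P \<subseteq> Hb_vertices R q" using a cc x2 x3U by (auto simp: Hb_vertices_def)
  moreover have "?Q \<subseteq> Hb_vertices R q" using cc y2U y3U by (auto simp: Hb_vertices_def)
  moreover have "card ?P = 2" using abb by simp
  moreover have "card ?Q = 2" using cd by simp
  moreover have "?P \<inter> ?Q = {}" by auto
  moreover have "\<forall>x\<in>?P. \<forall>y\<in>?Q. Hb_adj R q s x y" using e1 e2 e3 e4 by auto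
  ultimately show ?thesis unfolding K22_copies_def by blast
qed


definition "tup p = (case p of (a, w, (b, al), x2) \<Rightarrow>
   let be = b \<otimes> (al \<ominus> \<one>); u = al \<otimes> w; v = be \<otimes> w; t = u \<oplus> v \<ominus> w;
       y2 = NN u \<otimes> inv x2; y3 = NN w \<otimes> inv x2; x3 = NN t \<otimes> inv y2
   in ((Inl (a, x2), Inl (v \<ominus> w \<oplus> a, x3), Inr (u \<ominus> a, y2), Inr (w \<ominus> a, y3)) ::
     ('a \<times> 'a + 'a \<times> 'a) \<times> ('a \<times> 'a + 'a \<times> 'a) \<times> ('a \<times> 'a + 'a \<times> 'a) \<times> ('a \<times> 'a + 'a \<times> 'a)))"

definition "Par = carrier R \<times> (carrier R - {\<zero>}) \<times>
   (SIGMA b: carrier R - {\<zero>, \<ominus> \<one>}. {al \<in> carrier R. NN (al \<otimes> b) = NN (b \<oplus> \<one>)} - {\<zero>, \<one>, \<one> \<oplus> inv b})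
   \<times> units_q R q"

definition "gg = (\<lambda>(X :: 'a \<times> 'a + 'a \<times> 'a, X' :: 'a \<times> 'a + 'a \<times> 'a, Y :: 'a \<times> 'a + 'a \<times> 'a, Y' :: 'a \<times> 'a + 'a \<times> 'a). {{X, X'}, {Y, Y'}})"

lemma tup_K22: assumes p: "p \<in> Par" shows "gg (tup p) \<in> K22_copies (Hb_vertices R q) (Hb_adj R q s)"
proof -
  obtain a w b al x2 where P: "p = (a, w, (b, al), x2)" by (cases p) auto
  have m: "a \<in> carrier R" "w \<in> carrier R" "w \<noteq> \<zero>" "b \<in> carrier R" "b \<noteq> \<zero>" "b \<noteq> \<ominus> \<one>"
    "al \<in> carrier R" "NN (al \<otimes> b) = NN (b \<oplus> \<one>)" "al \<noteq> \<zero>" "al \<noteq> \<one>" "al \<noteq> \<one> \<oplus> inv b"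
    "x2 \<in> units_q R q"
    using p unfolding P Par_def by auto
  define be where "be = b \<otimes> (al \<ominus> \<one>)"
  define u where "u = al \<otimes> w"
  define v where "v = be \<otimes> w"
  define t where "t = u \<oplus> v \<ominus> w"
  define y2 where "y2 = NN u \<otimes> inv x2"
  define y3 where "y3 = NN w \<otimes> inv x2"
  define x3 where "x3 = NN t \<otimes> inv y2"
  have "gg (tup p) = {{Inl (a, x2), Inl (v \<ominus> w \<oplus> a, x3)}, {Inr (u \<ominus> a, y2), Inr (w \<ominus> a, y3)}}"
    unfolding P tup_def gg_def Let_def be_def u_def v_def t_def y2_def y3_def x3_def by simp
  also have "\<dots> \<in> K22_copies (Hb_vertices R q) (Hb_adj R q s)"
    by (rule key[OF m be_def u_def v_def t_def refl refl refl y2_def y3_def x3_def])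
  finally show ?thesis .
qed

lemma sub_canc: "x \<in> carrier R \<Longrightarrow> y \<in> carrier R \<Longrightarrow> z \<in> carrier R \<Longrightarrow> x \<ominus> z = y \<ominus> z \<Longrightarrow> x = y"
proof -
  assume c: "x \<in> carrier R" "y \<in> carrier R" "z \<in> carrier R" and h: "x \<ominus> z = y \<ominus> z"
  have "x = (x \<ominus> z) \<oplus> z" "y = (y \<ominus> z) \<oplus> z" using c by algebra+
  then show "x = y" using h by metis
qed

lemma sub_canc2: "x \<in> carrier R \<Longrightarrow> y \<in> carrier R \<Longrightarrow> z \<in> carrier R \<Longrightarrow> a \<in> carrier R \<Longrightarrow> x \<ominus> z \<oplus> a = y \<ominus> z \<oplus> a \<Longrightarrow> x = y"
proof -
  assume c: "x \<in> carrier R" "y \<in> carrier R" "z \<in> carrier R" "a \<in> carrier R" and h: "x \<ominus> z \<oplus> a = y \<ominus> z \<oplus> a"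
  have "x = (x \<ominus> z \<oplus> a) \<ominus> a \<oplus> z" "y = (y \<ominus> z \<oplus> a) \<ominus> a \<oplus> z" using c by algebra+
  then show "x = y" using h by metis
qed

lemma tup_inj: "inj_on tup Par"
proof (rule inj_onI)
  fix p1 p2 assume p1: "p1 \<in> Par" and p2: "p2 \<in> Par" and eq: "tup p1 = tup p2"
  obtain a1 w1 b1 al1 x1 where P1: "p1 = (a1, w1, (b1, al1), x1)" by (cases p1) auto
  obtain a2 w2 b2 al2 x2 where P2: "p2 = (a2, w2, (b2, al2), x2)" by (cases p2) auto
  have c1: "a1 \<in> carrier R" "w1 \<in> carrier R" "w1 \<noteq> \<zero>" "b1 \<in> carrier R" "al1 \<in> carrier R" "al1 \<noteq> \<one>"
    "x1 \<in> carrier R"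
    using p1 unfolding P1 Par_def by (auto simp: U_iff)
  have c2: "a2 \<in> carrier R" "w2 \<in> carrier R" "w2 \<noteq> \<zero>" "b2 \<in> carrier R" "al2 \<in> carrier R" "al2 \<noteq> \<one>"
    "x2 \<in> carrier R"
    using p2 unfolding P2 Par_def by (auto simp: U_iff)
  have e: "a1 = a2" "x1 = x2"
    "(b1 \<otimes> (al1 \<ominus> \<one>)) \<otimes> w1 \<ominus> w1 \<oplus> a1 = (b2 \<otimes> (al2 \<ominus> \<one>)) \<otimes> w2 \<ominus> w2 \<oplus> a2"
    "al1 \<otimes> w1 \<ominus> a1 = al2 \<otimes> w2 \<ominus> a2" "w1 \<ominus> a1 = w2 \<ominus> a2"
    using eq unfolding P1 P2 tup_def Let_def prod.case prod.inject sum.inject by blast+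
  have w: "w1 = w2" by (rule sub_canc[of w1 w2 a1]) (use e c1 c2 in auto)
  have "al1 \<otimes> w1 = al2 \<otimes> w1" by (rule sub_canc[of _ _ a1]) (use e c1 c2 w in auto)
  then have al: "al1 = al2" using m_rcancel[of w1 al1 al2] c1 c2 by auto
  have "(b1 \<otimes> (al1 \<ominus> \<one>)) \<otimes> w1 = (b2 \<otimes> (al1 \<ominus> \<one>)) \<otimes> w1"
    by (rule sub_canc2[of _ _ w1 a1]) (use e c1 c2 w al in auto)
  then have "b1 \<otimes> (al1 \<ominus> \<one>) = b2 \<otimes> (al1 \<ominus> \<one>)" using m_rcancel[of w1] c1 c2 by auto
  then have b: "b1 = b2" using m_rcancel[of "al1 \<ominus> \<one>" b1 b2] c1 c2 by auto
  show "p1 = p2" using P1 P2 e w al b by simp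
qed


lemma A_card: assumes b: "b \<in> carrier R" "b \<noteq> \<zero>" "b \<noteq> \<ominus> \<one>"
  shows "card KK \<le> card ({al \<in> carrier R. NN (al \<otimes> b) = NN (b \<oplus> \<one>)} - {\<zero>, \<one>, \<one> \<oplus> inv b}) + 3"
proof -
  have b1: "b \<oplus> \<one> \<noteq> \<zero>"
  proof
    assume "b \<oplus> \<one> = \<zero>"
    moreover have "b = (b \<oplus> \<one>) \<ominus> \<one>" using b by algebra
    ultimately have "b = \<ominus> \<one>" using b by algebra
    then show False using b by simp
  qed
  define c where "c = (b \<oplus> \<one>) \<otimes> inv b"
  have cc: "c \<in> carrier R" "c \<noteq> \<zero>" unfolding c_def using b b1 by (auto simp: fmult_nz finv_nz)
  have cb: "c \<otimes> b = b \<oplus> \<one>" unfolding c_def using b by (simp add: inv_canc2)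
  let ?F = "{x \<in> carrier R. NN x = NN c}"
  let ?G = "{al \<in> carrier R. NN (al \<otimes> b) = NN (b \<oplus> \<one>)}"
  have FG: "?F \<subseteq> ?G"
  proof
    fix x assume "x \<in> ?F"
    then have x: "x \<in> carrier R" "NN x = NN c" by auto
    have "NN (x \<otimes> b) = NN c \<otimes> NN b" using x b by (simp add: NN_mult)
    also have "\<dots> = NN (b \<oplus> \<one>)" using cc b by (simp add: NN_mult[symmetric] cb)
    finally show "x \<in> ?G" using x by simp
  qed
  have "card KK = card ?F" using KK_card[OF cc] by simp
  also have "\<dots> \<le> card ?G" using FG fin by (intro card_mono) auto
  also have "\<dots> \<le> card (?G - {\<zero>, \<one>, \<one> \<oplus> inv b}) + card {\<zero>, \<one>, \<one> \<oplus> inv b}"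
    using diff_card_le_card_Diff[of "{\<zero>, \<one>, \<one> \<oplus> inv b}" ?G] by simp
  also have "card {\<zero>, \<one>, \<one> \<oplus> inv b} \<le> 3"
    using card_ins_le[of "{\<one>, \<one> \<oplus> inv b}" \<zero>] card_ins_le[of "{\<one> \<oplus> inv b}" \<one>] by simp
  finally show ?thesis by simp
qed

lemma Par_card: "real (q ^ (s - 1)) * (real (q ^ (s - 1)) - 1) * (real (q ^ (s - 1)) - 2) *
     (real (q ^ (s - 1)) - 1 - 3 * real q) \<le> real (card Par)"
proof -
  let ?Q = "q ^ (s - 1)"
  let ?B = "carrier R - {\<zero>, \<ominus> \<one>}"
  let ?A = "\<lambda>b. {al \<in> carrier R. NN (al \<otimes> b) = NN (b \<oplus> \<one>)} - {\<zero>, \<one>, \<one> \<oplus> inv b}"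
  have Q2: "?Q \<ge> 2"
  proof -
    have "q ^ 1 \<le> q ^ (s - 1)" using q2 s2 by (intro power_increasing) auto
    then show ?thesis using q2 by simp
  qed
  have cS: "card (carrier R - {\<zero>}) = ?Q - 1" using fin cardR by (simp add: card_Diff_singleton)
  have cB: "?Q - 2 \<le> card ?B"
  proof -
    have "card (carrier R) - card {\<zero>, \<ominus> \<one>} \<le> card ?B" by (rule diff_card_le_card_Diff) simp
    moreover have "card {\<zero>, \<ominus> \<one>} \<le> 2" using card_ins_le[of "{\<ominus> \<one>}" \<zero>] by simp
    ultimately show ?thesis using cardR by simp
  qed
  have cSig: "card ?B * (card KK - 3) \<le> card (Sigma ?B ?A)"
  proof -
    have "card (Sigma ?B ?A) = (\<Sum>b\<in>?B. card (?A b))" using fin by (intro card_SigmaI) auto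
    moreover have "(\<Sum>b\<in>?B. card KK - 3) \<le> (\<Sum>b\<in>?B. card (?A b))"
    proof (rule sum_mono)
      fix b assume "b \<in> ?B"
      then have "card KK \<le> card (?A b) + 3" by (intro A_card) auto
      then show "card KK - 3 \<le> card (?A b)" by simp
    qed
    ultimately show ?thesis by simp
  qed
  have cPar: "card Par = ?Q * ((?Q - 1) * (card (Sigma ?B ?A) * card (units_q R q)))"
    unfolding Par_def card_cartesian_product cS cardR by simp
  define Qr where "Qr = real ?Q"
  define U where "U = real (card (units_q R q))"
  define K where "K = real (card KK)"
  define S where "S = real (card (Sigma ?B ?A))"
  define K3 where "K3 = real (card KK - 3)"
  have Q2r: "Qr \<ge> 2" unfolding Qr_def using of_nat_le_iff[of 2 "?Q", THEN iffD2, OF Q2] by simp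
  have r1: "real (?Q - 1) = Qr - 1" unfolding Qr_def using Q2 by simp
  have r2: "Qr - 2 \<le> real (card ?B)" unfolding Qr_def using cB Q2 by linarith
  have r3: "K - 3 \<le> K3" unfolding K_def K3_def by linarith
  have K3p: "K3 \<ge> 0" unfolding K3_def by simp
  have Up: "U \<ge> 0" unfolding U_def by simp
  have UK: "Qr - 1 \<le> U * K"
  proof -
    have "real (?Q - 1) \<le> real (card (units_q R q) * card KK)" using UK_card by (simp only: of_nat_le_iff)
    then show ?thesis unfolding U_def K_def r1[symmetric] by simp
  qed
  have Uq: "U \<le> real q" unfolding U_def using U_card by simp
  have Sr: "real (card ?B) * K3 \<le> S" unfolding S_def K3_def
  proof -
    have "real (card ?B * (card KK - 3)) \<le> real (card (Sigma ?B ?A))" using cSig by (simp only: of_nat_le_iff)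
    then show "real (card ?B) * real (card KK - 3) \<le> real (card (Sigma ?B ?A))" by simp
  qed
  have PR: "real (card Par) = Qr * (Qr - 1) * S * U"
    unfolding cPar Qr_def S_def U_def using r1 unfolding Qr_def by simp
  have X: "Qr - 1 - 3 * real q \<le> U * K3"
  proof -
    have "Qr - 1 - 3 * real q \<le> U * K - 3 * U" using UK Uq by linarith
    also have "\<dots> = U * (K - 3)" by (simp add: algebra_simps)
    also have "\<dots> \<le> U * K3" using r3 Up by (simp add: mult_left_mono)
    finally show ?thesis .
  qed
  have Y: "(Qr - 2) * K3 \<le> S"
  proof -
    have "(Qr - 2) * K3 \<le> real (card ?B) * K3" using r2 K3p by (simp add: mult_right_mono)
    then show ?thesis using Sr by linarith
  qed
  have A0: "Qr * (Qr - 1) * (Qr - 2) \<ge> 0" using Q2r by simp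
  have "Qr * (Qr - 1) * (Qr - 2) * (Qr - 1 - 3 * real q) \<le> Qr * (Qr - 1) * (Qr - 2) * (U * K3)"
    using X A0 by (rule mult_left_mono)
  also have "\<dots> = Qr * (Qr - 1) * ((Qr - 2) * K3) * U" by (simp add: algebra_simps)
  also have "\<dots> \<le> Qr * (Qr - 1) * S * U"
  proof -
    have "Qr * (Qr - 1) * ((Qr - 2) * K3) \<le> Qr * (Qr - 1) * S"
      using Y Q2r by (intro mult_left_mono) auto
    then show ?thesis using Up by (rule mult_right_mono)
  qed
  finally show ?thesis unfolding PR Qr_def .
qed

lemma main_count: "real (q ^ (s - 1)) * (real (q ^ (s - 1)) - 1) * (real (q ^ (s - 1)) - 2) *
     (real (q ^ (s - 1)) - 1 - 3 * real q) \<le> 4 * real (card (K22_copies (Hb_vertices R q) (Hb_adj R q s)))"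
proof -
  have finPar: "finite Par" unfolding Par_def using fin
    by (auto simp: units_q_def subfield_q_def intro!: finite_SigmaI)
  have finV: "finite (Hb_vertices R q)" unfolding Hb_vertices_def using fin
    by (auto simp: units_q_def subfield_q_def)
  have sh: "\<forall>t\<in>tup ` Par. \<exists>A A' B B'. t = (Inl A, Inl A', Inr B, Inr B')"
    by (auto simp: tup_def Let_def split: prod.splits)
  have c1: "card Par = card (tup ` Par)" by (rule sym[OF card_image[OF tup_inj]])
  have c2: "card (tup ` Par) \<le> 4 * card (gg ` tup ` Par)"
    using four_fiber[OF sh] finPar unfolding gg_def by simp
  have c3: "card (gg ` tup ` Par) \<le> card (K22_copies (Hb_vertices R q) (Hb_adj R q s))"
    using tup_K22 K22_finite[OF finV] by (intro card_mono) auto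
  have "card Par \<le> 4 * card (K22_copies (Hb_vertices R q) (Hb_adj R q s))" using c1 c2 c3 by linarith
  then have "real (card Par) \<le> real (4 * card (K22_copies (Hb_vertices R q) (Hb_adj R q s)))"
    by (simp only: of_nat_le_iff)
  then have "real (card Par) \<le> 4 * real (card (K22_copies (Hb_vertices R q) (Hb_adj R q s)))"
    by simp
  then show ?thesis using Par_card by linarith
qed

end
end


lemma prod4_ge: fixes m a b c d :: real
  assumes "0 \<le> m" "m \<le> a" "m \<le> b" "m \<le> c" "m \<le> d" shows "m ^ 4 \<le> a * b * c * d"
proof -
  have "m * m \<le> a * b" using assms by (intro mult_mono) auto
  moreover have "m * m \<le> c * d" using assms by (intro mult_mono) auto
  ultimately have "(m * m) * (m * m) \<le> (a * b) * (c * d)" using assms by (intro mult_mono) auto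
  then show ?thesis by (simp add: power4_eq_xxxx algebra_simps)
qed

lemma asym: fixes Qr qr e :: real
  assumes q4: "qr \<ge> 4" and qe: "qr \<ge> 16 / e" and e: "e > 0" and Q: "Qr \<ge> qr ^ 2"
  shows "(1 - e) * Qr ^ 4 \<le> Qr * (Qr - 1) * (Qr - 2) * (Qr - 1 - 3 * qr)"
proof -
  define x where "x = 1 - 4 / qr"
  have x0: "0 \<le> x" unfolding x_def using q4 by (simp add: field_simps)
  have "4 * qr \<le> qr * qr" using q4 by (intro mult_right_mono) auto
  then have Qp: "Qr \<ge> 4 * qr" using Q by (simp add: power2_eq_square)
  have m0: "0 \<le> Qr - 4 * qr" using Qp by simp
  have L: "(Qr - 4 * qr) ^ 4 \<le> Qr * (Qr - 1) * (Qr - 2) * (Qr - 1 - 3 * qr)"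
    using m0 q4 by (intro prod4_ge) auto
  have "Qr * x \<le> Qr - 4 * qr"
  proof -
    have "Qr * x = Qr - 4 * (Qr / qr)" unfolding x_def using q4 by (simp add: field_simps)
    moreover have "qr \<le> Qr / qr" using Q q4 by (simp add: field_simps power2_eq_square)
    ultimately show ?thesis by simp
  qed
  then have "(Qr * x) ^ 4 \<le> (Qr - 4 * qr) ^ 4" using x0 Qp q4 by (intro power_mono) auto
  moreover have "1 - 16 / qr \<le> x ^ 4"
  proof -
    have "1 + real 4 * (- 4 / qr) \<le> (1 + (- 4 / qr)) ^ 4"
      by (rule Bernoulli_inequality) (use q4 in \<open>simp add: field_simps\<close>)
    then show ?thesis unfolding x_def by simp
  qed
  moreover have "1 - e \<le> 1 - 16 / qr" using qe e q4 by (simp add: field_simps)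
  ultimately have "(1 - e) * Qr ^ 4 \<le> (Qr * x) ^ 4"
  proof -
    assume a: "(Qr * x) ^ 4 \<le> (Qr - 4 * qr) ^ 4" "1 - 16 / qr \<le> x ^ 4" "1 - e \<le> 1 - 16 / qr"
    have "(1 - e) * Qr ^ 4 \<le> x ^ 4 * Qr ^ 4" using a by (intro mult_right_mono) auto
    then show ?thesis by (simp add: power_mult_distrib mult.commute)
  qed
  then show ?thesis using L \<open>(Qr * x) ^ 4 \<le> (Qr - 4 * qr) ^ 4\<close> by linarith
qed

theorem lemma4p5:
  fixes s :: nat
  assumes "s \<ge> 3"
  shows "\<forall>\<epsilon>::real. \<epsilon> > 0 \<longrightarrow> (\<exists>Q::nat. \<forall>q (R :: nat ring).
           q \<ge> Q \<and> odd_prime_power q \<and> field R \<and> finite (carrier R) \<and>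
           card (carrier R) = q ^ (s - 1) \<longrightarrow>
           real (card (K22_copies (Hb_vertices R q) (Hb_adj R q s)))
             \<ge> (1 - \<epsilon>) * real q ^ (4 * (s - 1)) / 4)"
proof (intro allI impI)
  fix e :: real assume e: "e > 0"
  show "\<exists>Q::nat. \<forall>q (R :: nat ring).
           q \<ge> Q \<and> odd_prime_power q \<and> field R \<and> finite (carrier R) \<and>
           card (carrier R) = q ^ (s - 1) \<longrightarrow>
           real (card (K22_copies (Hb_vertices R q) (Hb_adj R q s)))
             \<ge> (1 - e) * real q ^ (4 * (s - 1)) / 4"
  proof (rule exI[of _ "nat \<lceil>16 / e\<rceil> + 4"], intro allI impI)
    fix q and R :: "nat ring"
    assume H: "nat \<lceil>16 / e\<rceil> + 4 \<le> q \<and> odd_prime_power q \<and> field R \<and> finite (carrier R) \<and>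
           card (carrier R) = q ^ (s - 1)"
    then have q4: "q \<ge> 4" and fR: "field R" and fin: "finite (carrier R)"
      and cR: "card (carrier R) = q ^ (s - 1)" by auto
    have q2: "q \<ge> 2" using q4 by simp
    have s2: "s \<ge> 2" using assms by simp
    have qe: "real q \<ge> 16 / e"
    proof -
      have "16 / e \<le> real (nat \<lceil>16 / e\<rceil>)" by (rule real_nat_ceiling_ge)
      also have "\<dots> \<le> real q"
      proof -
        have h1: "nat \<lceil>16 / e\<rceil> + 4 \<le> q" using H by blast
        have "nat \<lceil>16 / e\<rceil> \<le> q" using h1 by linarith
        then show ?thesis by (simp only: of_nat_le_iff)
      qed
      finally show ?thesis .
    qed
    have q4r: "real q \<ge> 4" using q4 by simp
    have "q ^ 2 \<le> q ^ (s - 1)" using q4 assms by (intro power_increasing) auto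
    then have Qq: "real (q ^ (s - 1)) \<ge> real q ^ 2"
      by (metis of_nat_le_iff of_nat_power)
    have mc: "real (q ^ (s - 1)) * (real (q ^ (s - 1)) - 1) * (real (q ^ (s - 1)) - 2) *
     (real (q ^ (s - 1)) - 1 - 3 * real q) \<le> 4 * real (card (K22_copies (Hb_vertices R q) (Hb_adj R q s)))"
      by (rule field.main_count[OF fR fin cR q2 s2])
    have as: "(1 - e) * real (q ^ (s - 1)) ^ 4 \<le> real (q ^ (s - 1)) * (real (q ^ (s - 1)) - 1) * (real (q ^ (s - 1)) - 2) *
     (real (q ^ (s - 1)) - 1 - 3 * real q)"
      by (rule asym[OF q4r qe e Qq])
    have pw: "real q ^ (4 * (s - 1)) = real (q ^ (s - 1)) ^ 4"
      by (simp add: power_mult[symmetric] mult.commute)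
    show "(1 - e) * real q ^ (4 * (s - 1)) / 4 \<le> real (card (K22_copies (Hb_vertices R q) (Hb_adj R q s)))"
      unfolding pw using mc as by linarith
  qed
qed

end
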